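(* Let a product two-action game with $m$ players be given, and let $\pi\in\mathrm{Der}_m$. Then the set $EC(\pi)$ consists of exactly one point, namely $\underline\gamma$ with $\gamma^j=a^{\pi(j)}_j$ for all $j\in\mathcal A$, and this point is a Nash equilibrium (with all $\gamma^j\in(0,1)$). In particular the game has at least $!m$ Nash equilibria in the open cube $(0,1)^m$.
   Context: Fix an integer $m\ge 1$ and $\mathcal A=\{1,\dots,m\}$. A two-action game is a finite game in normal form with player set $\mathcal A$ in which each player $i$ has exactly two pure strategies $s^i_0,s^i_1$, together with utility functions $U^i:S\to\mathbb R$, where $S=\prod_{i\in\mathcal A}\{s^i_0,s^i_1\}$. A mixed strategy combination is identified with $\underline\gamma=(\gamma^1,\dots,\gamma^m)\in[0,1]^m$, where $\gamma^i$ is the probability with which player $i$ plays $s^i_1$. The expected utility $V^i$ is the multilinear extension $V^i(\underline\gamma)=\sum_{(j_1,\dots,j_m)\in\{0,1\}^m}\prod_{k=1}^m p_k(j_k)\,U^i(s^1_{j_1},\dots,s^m_{j_m})$ with $p_k(1)=\gamma^k$, $p_k(0)=1-\gamma^k$. Write $\underline\gamma^{-i}=(\gamma^j)_{j\ne i}$ and $\lambda^i(\underline\gamma^{-i}):=V^i(\underline\gamma)|_{\gamma^i=1}-V^i(\underline\gamma)|_{\gamma^i=0}$. A Nash equilibrium is a point $\underline\gamma\in[0,1]^m$ such that for every $i$: $\lambda^i(\underline\gamma^{-i})=0$ if $0<\gamma^i<1$; $\lambda^i(\underline\gamma^{-i})\le 0$ if $\gamma^i=0$; $\lambda^i(\underline\gamma^{-i})\ge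 0$ if $\gamma^i=1$. For $\underline\gamma$ put $L_0(\underline\gamma)=\{i:\gamma^i=0\}$, $L_1(\underline\gamma)=\{i:\gamma^i=1\}$, $L(\underline\gamma)=L_0(\underline\gamma)\cup L_1(\underline\gamma)$. A two-action game is a product two-action game if there exist $\underline v=(v_1,\dots,v_m)\in\{0,1\}^m$ and numbers $a^i_j\in(0,1)$ for $i,j\in\mathcal A$, $i\ne j$, with $a^{i_1}_j\neq a^{i_2}_j$ whenever $i_1\neq i_2$ and both differ from $j$, such that $\lambda^i(\underline\gamma^{-i})=(-1)^{v_i}\prod_{j\in\mathcal A\setminus\{i\}}(\gamma^j-a^i_j)$ for every $i\in\mathcal A$. For $\pi\in S_m$, $F(\pi)=\{i\in\mathcal A:\pi(i)=i\}$; $\mathrm{Der}_m$ is the set of $\pi\in S_m$ with $F(\pi)=\emptyset$; $!m=|\mathrm{Der}_m|$. $EC(\pi):=\{\underline\gamma\in[0,1]^m \mid L(\underline\gamma)=F(\pi),\ \gamma^j=a^{\pi(j)}_j \text{ for all } j\notin F(\pi)\}$. *)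

theory Defs
  imports "HOL-Analysis.Analysis" "HOL-Combinatorics.Permutations"
begin

text \<open>A pure strategy of player i is a bool
 (False = s^i_0, True = s^i_1); a pure profile is an element of
 PiE {1..m} (\<lambda>_. UNIV).
 A mixed profile gamma is an element of the cube PiE {1..m} (\<lambda>_. {0..1}),
 gamma i = probability that player i plays s^i_1.\<close>

definition players :: "nat \<Rightarrow> nat set" where
  "players m = {1..m}"

definition cube :: "nat \<Rightarrow> (nat \<Rightarrow> real) set" where
  "cube m = PiE (players m) (\<lambda>_. {0..1})"

definition pure_profiles :: "nat \<Rightarrow> (nat \<Rightarrow> bool) set" where
  "pure_profiles m = PiE (players m) (\<lambda>_. UNIV)"

definition prob_of :: "real \<Rightarrow> bool \<Rightarrow> real" where
  "prob_of g b = (if b then g else 1 - g)"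

definition V :: "nat \<Rightarrow> (nat \<Rightarrow> (nat \<Rightarrow> bool) \<Rightarrow> real) \<Rightarrow> nat \<Rightarrow> (nat \<Rightarrow> real) \<Rightarrow> real" where
  "V m U i \<gamma> = (\<Sum>s\<in>pure_profiles m. (\<Prod>k\<in>players m. prob_of (\<gamma> k) (s k)) * U i s)"

definition lam :: "nat \<Rightarrow> (nat \<Rightarrow> (nat \<Rightarrow> bool) \<Rightarrow> real) \<Rightarrow> nat \<Rightarrow> (nat \<Rightarrow> real) \<Rightarrow> real" where
  "lam m U i \<gamma> = V m U i (\<gamma>(i := 1)) - V m U i (\<gamma>(i := 0))"

definition nash :: "nat \<Rightarrow> (nat \<Rightarrow> (nat \<Rightarrow> bool) \<Rightarrow> real) \<Rightarrow> (nat \<Rightarrow> real) \<Rightarrow> bool" where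
  "nash m U \<gamma> \<longleftrightarrow> \<gamma> \<in> cube m \<and>
     (\<forall>i\<in>players m.
        (0 < \<gamma> i \<and> \<gamma> i < 1 \<longrightarrow> lam m U i \<gamma> = 0) \<and>
        (\<gamma> i = 0 \<longrightarrow> lam m U i \<gamma> \<le> 0) \<and>
        (\<gamma> i = 1 \<longrightarrow> lam m U i \<gamma> \<ge> 0))"

text \<open>Product two-action game with data v, a (a i j = a^i_j).\<close>
definition product_game ::
  "nat \<Rightarrow> (nat \<Rightarrow> (nat \<Rightarrow> bool) \<Rightarrow> real) \<Rightarrow> (nat \<Rightarrow> nat) \<Rightarrow> (nat \<Rightarrow> nat \<Rightarrow> real) \<Rightarrow> bool" where
  "product_game m U v a \<longleftrightarrow>
     (\<forall>i\<in>players m. v i \<in> {0, 1}) \<and>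
     (\<forall>i\<in>players m. \<forall>j\<in>players m. i \<noteq> j \<longrightarrow> 0 < a i j \<and> a i j < 1) \<and>
     (\<forall>j\<in>players m. \<forall>i1\<in>players m. \<forall>i2\<in>players m.
        i1 \<noteq> i2 \<and> i1 \<noteq> j \<and> i2 \<noteq> j \<longrightarrow> a i1 j \<noteq> a i2 j) \<and>
     (\<forall>i\<in>players m. \<forall>\<gamma>\<in>cube m.
        lam m U i \<gamma> = (-1) ^ v i * (\<Prod>j\<in>players m - {i}. \<gamma> j - a i j))"

definition Fix :: "nat \<Rightarrow> (nat \<Rightarrow> nat) \<Rightarrow> nat set" where
  "Fix m \<pi> = {i\<in>players m. \<pi> i = i}"

definition Der :: "nat \<Rightarrow> (nat \<Rightarrow> nat) set" where
  "Der m = {\<pi>. \<pi> permutes players m \<and> Fix m \<pi> = {}}"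

definition L0 :: "nat \<Rightarrow> (nat \<Rightarrow> real) \<Rightarrow> nat set" where
  "L0 m \<gamma> = {i\<in>players m. \<gamma> i = 0}"

definition L1 :: "nat \<Rightarrow> (nat \<Rightarrow> real) \<Rightarrow> nat set" where
  "L1 m \<gamma> = {i\<in>players m. \<gamma> i = 1}"

definition Lset :: "nat \<Rightarrow> (nat \<Rightarrow> real) \<Rightarrow> nat set" where
  "Lset m \<gamma> = L0 m \<gamma> \<union> L1 m \<gamma>"

definition EC :: "nat \<Rightarrow> (nat \<Rightarrow> nat \<Rightarrow> real) \<Rightarrow> (nat \<Rightarrow> nat) \<Rightarrow> (nat \<Rightarrow> real) set" where
  "EC m a \<pi> = {\<gamma>\<in>cube m. Lset m \<gamma> = Fix m \<pi> \<and>
                  (\<forall>j\<in>players m - Fix m \<pi>. \<gamma> j = a (\<pi> j) j)}"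

end

theory Submission
  imports Defs
begin

lemma der_facts:
  assumes "\<pi> \<in> Der m" "j \<in> players m"
  shows "\<pi> j \<in> players m" "\<pi> j \<noteq> j"
  using assms unfolding Der_def Fix_def
  by (auto simp: permutes_in_image)

lemma gstar_props:
  assumes pg: "product_game m U v a" and d: "\<pi> \<in> Der m"
  shows "\<forall>j\<in>players m. 0 < a (\<pi> j) j \<and> a (\<pi> j) j < 1"
proof
  fix j assume j: "j \<in> players m"
  with der_facts[OF d j] pg show "0 < a (\<pi> j) j \<and> a (\<pi> j) j < 1"
    unfolding product_game_def by metis
qed

theorem theorem3p7:
  fixes m :: nat and U :: "nat \<Rightarrow> (nat \<Rightarrow> bool) \<Rightarrow> real"
    and v :: "nat \<Rightarrow> nat" and a :: "nat \<Rightarrow> nat \<Rightarrow> real"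
  assumes "m \<ge> 1"
    and "product_game m U v a"
  shows "(\<forall>\<pi>\<in>Der m.
            EC m a \<pi> = {restrict (\<lambda>j. a (\<pi> j) j) (players m)} \<and>
            nash m U (restrict (\<lambda>j. a (\<pi> j) j) (players m)) \<and>
            (\<forall>j\<in>players m. 0 < a (\<pi> j) j \<and> a (\<pi> j) j < 1))
       \<and> (\<exists>S. S \<subseteq> {\<gamma>. nash m U \<gamma> \<and> (\<forall>j\<in>players m. 0 < \<gamma> j \<and> \<gamma> j < 1)}
               \<and> finite S \<and> card S = card (Der m))"
proof -
  note pg = assms(2)
  define g where "g \<pi> = restrict (\<lambda>j. a (\<pi> j) j) (players m)" for \<pi> :: "nat \<Rightarrow> nat"
  have main: "EC m a \<pi> = {g \<pi>} \<and> nash m U (g \<pi>) \<and>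
            (\<forall>j\<in>players m. 0 < a (\<pi> j) j \<and> a (\<pi> j) j < 1)" if d: "\<pi> \<in> Der m" for \<pi>
  proof -
    have bnd: "\<forall>j\<in>players m. 0 < a (\<pi> j) j \<and> a (\<pi> j) j < 1" by (rule gstar_props[OF pg d])
    have fix0: "Fix m \<pi> = {}" using d by (simp add: Der_def)
    have cube: "g \<pi> \<in> cube m" using bnd by (auto simp: g_def cube_def less_imp_le)
    have L: "Lset m (g \<pi>) = {}" using bnd
      by (auto simp: Lset_def L0_def L1_def g_def)
    have EC: "EC m a \<pi> = {g \<pi>}"
    proof
      show "{g \<pi>} \<subseteq> EC m a \<pi>" using cube L fix0 by (auto simp: EC_def g_def)
      show "EC m a \<pi> \<subseteq> {g \<pi>}"
      proof
        fix \<gamma> assume "\<gamma> \<in> EC m a \<pi>"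
        hence c: "\<gamma> \<in> cube m" and e: "\<forall>j\<in>players m. \<gamma> j = a (\<pi> j) j"
          using fix0 by (auto simp: EC_def)
        have "\<gamma> = g \<pi>"
        proof
          fix j show "\<gamma> j = g \<pi> j"
            using c e by (cases "j \<in> players m") (auto simp: g_def cube_def PiE_def extensional_def)
        qed
        thus "\<gamma> \<in> {g \<pi>}" by simp
      qed
    qed
    have nash: "nash m U (g \<pi>)"
      unfolding nash_def
    proof (rule conjI[OF cube], rule ballI)
      fix i assume i: "i \<in> players m"
      have pp: "\<pi> permutes players m" using d by (simp add: Der_def)
      define j where "j = inv \<pi> i"
      have pj: "\<pi> j = i" unfolding j_def using pp by (simp add: permutes_inverses(1))
      have jin: "j \<in> players m" unfolding j_def using pp i
        by (simp add: permutes_in_image permutes_inv)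
      have jne: "j \<noteq> i" using der_facts(2)[OF d jin] pj by simp
      have fin: "finite (players m)" by (simp add: players_def)
      have "(\<Prod>k\<in>players m - {i}. g \<pi> k - a i k) = 0"
        using jin jne pj fin by (intro prod_zero) (auto simp: g_def intro!: bexI[of _ j])
      hence lam0: "lam m U i (g \<pi>) = 0" using pg i cube unfolding product_game_def by simp
      show "(0 < g \<pi> i \<and> g \<pi> i < 1 \<longrightarrow> lam m U i (g \<pi>) = 0) \<and>
        (g \<pi> i = 0 \<longrightarrow> lam m U i (g \<pi>) \<le> 0) \<and> (g \<pi> i = 1 \<longrightarrow> 0 \<le> lam m U i (g \<pi>))"
        using lam0 by simp
    qed
    show ?thesis using EC nash bnd by blast
  qed
  have inj: "inj_on g (Der m)"
  proof
    fix \<pi> \<sigma> assume d1: "\<pi> \<in> Der m" and d2: "\<sigma> \<in> Der m" and eq: "g \<pi> = g \<sigma>"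
    show "\<pi> = \<sigma>"
    proof
      fix j show "\<pi> j = \<sigma> j"
      proof (cases "j \<in> players m")
        case True
        have "a (\<pi> j) j = a (\<sigma> j) j" using fun_cong[OF eq, of j] True by (simp add: g_def)
        moreover note der_facts[OF d1 True] der_facts[OF d2 True]
        ultimately show ?thesis using pg True unfolding product_game_def by metis
      next
        case False
        thus ?thesis using d1 d2 unfolding Der_def by (metis (mono_tags) mem_Collect_eq permutes_not_in)
      qed
    qed
  qed
  have finD: "finite (Der m)"
  proof -
    have "Der m \<subseteq> {p. p permutes players m}" by (auto simp: Der_def)
    moreover have "finite {p. p permutes players m}"
      by (rule finite_permutations) (simp add: players_def)
    ultimately show ?thesis by (rule finite_subset)
  qed
  have "g ` Der m \<subseteq> {\<gamma>. nash m U \<gamma> \<and> (\<forall>j\<in>players m. 0 < \<gamma> j \<and> \<gamma> j < 1)}"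
    using main by (auto simp: g_def)
  moreover have "finite (g ` Der m)" using finD by simp
  moreover have "card (g ` Der m) = card (Der m)" using inj by (simp add: card_image)
  ultimately show ?thesis using main unfolding g_def by blast
qed

end
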